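(* Let $X_1,X_2,\dots$ be independent uniform random variables on $(0,1]$ and $\mathcal{U}_m=(X_1,\dots,X_m)$. As $m\to\infty$: $E[D^\alpha(\mathcal{U}_m)]\sim\frac{\Gamma(\alpha+1)}{1-\alpha}m^{1-\alpha}$ for $0<\alpha<1$; $E[D^1(\mathcal{U}_m)]-\log m\to\gamma-2$; $E[D^\alpha(\mathcal{U}_m)]\to\frac1{\alpha(\alpha-1)}$ for $\alpha>1$, where $\gamma$ is Euler's constant.
   Context: For a sequence $(x_1,\dots,x_m)\in(0,1]^m$, the directed linear forest joins each $x_i$ ($i\ge2$) to $\max\{x_j:1\le j<i,\ x_j<x_i\}$ when this set is nonempty (otherwise $x_i$ gets no edge); its total weight with exponent $\alpha>0$ is $D^\alpha(x_1,\dots,x_m)=\sum_{i=2}^m(x_i-\max\{x_j:j<i,x_j<x_i\})^\alpha\mathbf{1}\{\min_{1\le j<i}x_j<x_i\}$. *)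

theory Defs
  imports "HOL-Analysis.Analysis" "HOL-Library.Landau_Symbols"
begin

text \<open>Directed linear forest weight. Sequence x_1..x_m is represented 0-indexed as
  x 0, ..., x (m-1). Index i (1 \<le> i < m) is joined to the largest earlier value
  smaller than x i, if any.\<close>
definition dlf_weight :: "real \<Rightarrow> nat \<Rightarrow> (nat \<Rightarrow> real) \<Rightarrow> real" where
  "dlf_weight \<alpha> m x =
     (\<Sum>i\<in>{1..<m}. if (\<exists>j<i. x j < x i)
        then (x i - Max {x j | j. j < i \<and> x j < x i}) powr \<alpha> else 0)"

definition unif_cube :: "nat \<Rightarrow> (nat \<Rightarrow> real) measure" where
  "unif_cube m = PiM {..<m} (\<lambda>_. uniform_measure lborel {0<..1})"

definition ED :: "real \<Rightarrow> nat \<Rightarrow> real" where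
  "ED \<alpha> m = integral\<^sup>L (unif_cube m) (dlf_weight \<alpha> m)"

end

theory Submission
  imports Defs "HOL-Probability.Probability" "HOL-Real_Asymp.Real_Asymp"
begin
definition cc :: "real \<Rightarrow> nat \<Rightarrow> real" where
  "cc a i = real i * Beta (a+1) (real i + 1)"

lemma cc_alt: assumes "a > 0" shows "cc a i = real i * Gamma (a+1) * fact i / Gamma (a + real i + 2)"
proof -
  have "Gamma (real i + 1) = fact i" using Gamma_fact[of i] by (simp add: add.commute)
  then show ?thesis unfolding cc_def Beta_def by (simp add: add_ac)
qed

lemma alg0b: fixes a b d x G F Ga :: real assumes "a \<noteq> 0" "b \<noteq> 0" "Ga \<noteq> 0" "d \<noteq> 0"
  and key: "(a*x+1)*d + x*a*b = (x+1)*(a*(x+1)+1)"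
  shows "G*F*(a*x+1)/(a*b*Ga) + x*G*F/(d*Ga) = G*(F*(x+1))*(a*(x+1)+1)/(a*b*(d*Ga))"
proof -
  have "G*F*(a*x+1)/(a*b*Ga) + x*G*F/(d*Ga) = G*F*((a*x+1)*d + x*a*b)/(a*b*(d*Ga))"
    using assms(1-4) by (simp add: field_simps)
  also have "\<dots> = G*(F*(x+1))*(a*(x+1)+1)/(a*b*(d*Ga))" unfolding key by (simp add: ac_simps)
  finally show ?thesis .
qed
lemma alg0: fixes a x G F Ga :: real assumes "a \<noteq> 0" "a \<noteq> 1" "Ga \<noteq> 0" "a+x+1 \<noteq> 0"
  shows "G*F*(a*x+1)/(a*(1-a)*Ga) + x*G*F/((a+x+1)*Ga) = G*(F*(x+1))*(a*(x+1)+1)/(a*(1-a)*((a+x+1)*Ga))"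
  by (rule alg0b) (use assms in \<open>auto simp: algebra_simps\<close>)

lemma sum_cc: assumes "a > 0" "a \<noteq> 1"
  shows "(\<Sum>i\<in>{1..<m}. cc a i) = Gamma (a+1) * fact m * (a*m+1) / (a*(1-a)*Gamma(a+m+1)) - 1/(a*(1-a))"
proof (induction m)
  case 0
  have "Gamma (a+1) > 0" by (rule Gamma_real_pos) (use assms in auto)
  then have "Gamma (a+1) \<noteq> 0" by linarith
  then show ?case using assms by (simp add: field_simps)
next
  case (Suc m)
  have s: "{1..<Suc m} = (if m = 0 then {} else insert m {1..<m})" by auto
  have "(\<Sum>i\<in>{1..<Suc m}. cc a i) = (\<Sum>i\<in>{1..<m}. cc a i) + cc a m"
    by (simp add: s cc_def)
  also have "\<dots> = Gamma (a+1) * fact m * (a*m+1) / (a*(1-a)*Gamma(a+m+1)) - 1/(a*(1-a)) + cc a m"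
    using Suc by simp
  also have "\<dots> = Gamma (a+1) * fact (Suc m) * (a*Suc m+1) / (a*(1-a)*Gamma(a+Suc m+1)) - 1/(a*(1-a))"
  proof -
    have g0: "Gamma (a + m + 1) > 0" using assms by (intro Gamma_real_pos) auto
    have np: "a + real m + 1 \<notin> \<int>\<^sub>\<le>\<^sub>0" using nonpos_Ints_nonpos[of "a + real m + 1"] assms by auto
    have g2: "Gamma (a + real m + 2) = (a+m+1) * Gamma (a+m+1)"
      using Gamma_plus1[OF np] by (simp add: add_ac)
    have g3: "Gamma (a + real (Suc m) + 1) = Gamma (a + real m + 2)" by (simp add: add_ac)
    have e1: "cc a m = real m * Gamma(a+1) * fact m / ((a+real m+1) * Gamma(a+real m+1))"
      by (simp add: cc_alt[OF assms(1)] g2)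
    have e2: "Gamma (a + (real m + 1) + 1) = (a+real m+1) * Gamma(a+real m+1)" using g2 g3 by simp
    have e3: "(fact (Suc m) :: real) = fact m * (real m + 1)" by (simp add: fact_Suc)
    have e4: "real (Suc m) = real m + 1" by simp
    have A0: "Gamma(a+1)*fact m*(a*real m+1)/(a*(1-a)*Gamma(a+real m+1)) + real m*Gamma(a+1)*fact m/((a+real m+1)*Gamma(a+real m+1))
       = Gamma(a+1)*(fact m*(real m+1))*(a*(real m+1)+1)/(a*(1-a)*((a+real m+1)*Gamma(a+real m+1)))"
      by (rule alg0) (use assms g0 in linarith)+
    show ?thesis unfolding e4 e1 e2 e3 using A0 by linarith
  qed
  finally show ?case .
qed
lemma alg1: fixes G F X C Ga p :: real assumes "p \<noteq> 0"
  shows "G*F*X/(C*Ga) - K = G/C*(F*p/Ga)*(X/p) - K"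
  using assms by (simp add: field_simps)
lemma alg2: fixes G F X Ga p m a b :: real assumes "p \<noteq> 0" "m \<noteq> 0" "a \<noteq> 0" "b \<noteq> 0" "G \<noteq> 0" "Ga \<noteq> 0"
  shows "(G*F*X/(a*b*Ga) - 1/(a*b)) / (G/b * (m / p)) = (F*p/Ga)*(X/(a*m)) - 1/(a*G) * (p/m)"
  using assms by (simp add: field_simps)
lemma R_lim: assumes "a > 0" shows "(\<lambda>m. fact m * real m powr a / Gamma (a + real m + 1)) \<longlonglongrightarrow> 1"
proof -
  have ga: "Gamma a \<noteq> 0" using Gamma_real_pos[OF assms] by linarith
  have nz: "a \<notin> \<int>\<^sub>\<le>\<^sub>0" using assms by (auto elim!: nonpos_Ints_cases)
  have "(\<lambda>m. Gamma_series a m / Gamma a) \<longlonglongrightarrow> Gamma a / Gamma a"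
    by (intro tendsto_intros ga)
  then have L: "(\<lambda>m. Gamma_series a m / Gamma a) \<longlonglongrightarrow> 1" using ga by simp
  have "eventually (\<lambda>m. Gamma_series a m / Gamma a = fact m * real m powr a / Gamma (a + real m + 1)) sequentially"
    using eventually_gt_at_top[of 0]
  proof eventually_elim
    case (elim m)
    have "pochhammer a (m+1) = Gamma (a + real (m+1)) / Gamma a" by (rule pochhammer_Gamma[OF nz])
    moreover have "exp (a * ln (real m)) = real m powr a" using elim by (simp add: powr_def)
    moreover have "Gamma (a + real (m+1)) > 0" using assms by (intro Gamma_real_pos) auto
    ultimately show ?case using ga unfolding Gamma_series_def by (simp add: add_ac field_simps)
  qed
  from tendsto_cong[OF this] L show ?thesis by simp
qed

lemma asym_gt1: assumes "a > 1" "\<And>m. f m = (\<Sum>i\<in>{1..<m}. cc a i)"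
  shows "f \<longlonglongrightarrow> 1 / (a * (a - 1))"
proof -
  have a0: "a > 0" "a \<noteq> 1" using assms by auto
  define R where "R m = fact m * real m powr a / Gamma (a + real m + 1)" for m
  have e: "eventually (\<lambda>m. f m = Gamma (a+1) / (a*(1-a)) * R m * ((a*m+1) / real m powr a) - 1/(a*(1-a))) sequentially"
    using eventually_gt_at_top[of 0]
  proof eventually_elim
    case (elim m)
    then have "real m powr a \<noteq> 0" by simp
    then show ?case unfolding assms(2) sum_cc[OF a0] R_def by (rule alg1)
  qed
  have l1: "(\<lambda>m::nat. (a*m+1) / real m powr a) \<longlonglongrightarrow> 0" using assms(1) by real_asymp
  have "(\<lambda>m. Gamma (a+1) / (a*(1-a)) * R m * ((a*m+1) / real m powr a) - 1/(a*(1-a))) \<longlonglongrightarrow> Gamma (a+1) / (a*(1-a)) * 1 * 0 - 1/(a*(1-a))"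
    unfolding R_def by (intro tendsto_intros R_lim l1 a0)
  moreover have "a*(1-a) = - (a*(a-1))" by algebra
  ultimately have "(\<lambda>m. Gamma (a+1) / (a*(1-a)) * R m * ((a*m+1) / real m powr a) - 1/(a*(1-a))) \<longlonglongrightarrow> 1 / (a * (a - 1))"
    by simp
  with tendsto_cong[OF e] show ?thesis by simp
qed

lemma asym_lt1: assumes "0 < a" "a < 1" "\<And>m. f m = (\<Sum>i\<in>{1..<m}. cc a i)"
  shows "f \<sim>[at_top] (\<lambda>m. Gamma (a + 1) / (1 - a) * real m powr (1 - a))"
proof (rule asymp_equivI')
  have a0: "a > 0" "a \<noteq> 1" using assms by auto
  have gp: "Gamma (a+1) > 0" using assms by (intro Gamma_real_pos) auto
  define R where "R m = fact m * real m powr a / Gamma (a + real m + 1)" for m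
  have e: "eventually (\<lambda>m. f m / (Gamma (a + 1) / (1 - a) * real m powr (1 - a)) = R m * ((a*m+1) / (a*m)) - 1 / (a*Gamma (a+1)) * (real m powr a / real m)) sequentially"
    using eventually_gt_at_top[of 0]
  proof eventually_elim
    case (elim m)
    then have p: "real m powr a \<noteq> 0" by simp
    have q: "real m powr (1 - a) = real m / real m powr a" using elim by (simp add: powr_diff)
    have "Gamma (a + real m + 1) > 0" using a0 by simp
    moreover have "1 - a \<noteq> 0" "a \<noteq> 0" "real m \<noteq> 0" using a0 elim by auto
    ultimately show ?case unfolding assms(3) sum_cc[OF a0] R_def q using p gp
      by (intro alg2) auto
  qed
  have l1: "(\<lambda>m::nat. (a*m+1) / (a*m)) \<longlonglongrightarrow> 1" using assms(1) by real_asymp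
  have l2: "(\<lambda>m::nat. real m powr a / real m) \<longlonglongrightarrow> 0" using assms(2) by real_asymp
  have "(\<lambda>m. R m * ((a*m+1) / (a*m)) - 1 / (a*Gamma (a+1)) * (real m powr a / real m)) \<longlonglongrightarrow> 1 * 1 - 1 / (a*Gamma (a+1)) * 0"
    unfolding R_def by (intro tendsto_intros R_lim l1 l2 a0)
  then show "((\<lambda>m. f m / (Gamma (a + 1) / (1 - a) * real m powr (1 - a))) \<longlongrightarrow> 1) at_top"
    using tendsto_cong[OF e] by simp
qed

lemma cc1: "cc 1 i = 2 / (real i + 2) - 1 / (real i + 1)"
proof -
  have "Gamma (1 + real i + 2) = fact i * ((real i + 2) * (real i + 1))"
    using Gamma_plus1[of "real i + 2"] Gamma_plus1[of "real i + 1"] Gamma_fact[of i]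
    by (simp add: add_ac nonpos_Ints_def)
  moreover have "Gamma (2::real) = 1" using Gamma_fact[of 1] by simp
  ultimately have "cc 1 i = real i / ((real i + 2) * (real i + 1))"
    unfolding cc_alt[of 1, simplified] by simp
  also have "\<dots> = 2 / (real i + 2) - 1 / (real i + 1)"
    by (simp add: field_simps)
  finally show ?thesis .
qed

lemma sum_cc1: "(\<Sum>i\<in>{1..<m}. cc 1 i) = harm m + 2 / (real m + 1) - 2"
proof (induction m)
  case 0 then show ?case by (simp add: harm_def)
next
  case (Suc m)
  have s: "{1..<Suc m} = (if m = 0 then {} else insert m {1..<m})" by auto
  have "(\<Sum>i\<in>{1..<Suc m}. cc 1 i) = (\<Sum>i\<in>{1..<m}. cc 1 i) + cc 1 m"
    by (simp add: s cc_def)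
  also have "\<dots> = harm m + 2 / (real m + 1) - 2 + (2 / (real m + 2) - 1 / (real m + 1))"
    using Suc cc1 by simp
  also have "\<dots> = harm (Suc m) + 2 / (real (Suc m) + 1) - 2"
    by (simp add: harm_Suc inverse_eq_divide add_ac)
  finally show ?case .
qed

lemma asym_1: assumes "\<And>m. f m = (\<Sum>i\<in>{1..<m}. cc 1 i)"
  shows "(\<lambda>m. f m - ln (real m)) \<longlonglongrightarrow> euler_mascheroni - 2"
proof -
  have l: "(\<lambda>m::nat. 2 / (real m + 1)) \<longlonglongrightarrow> 0" by real_asymp
  have "(\<lambda>m. (harm m - ln (real m)) + 2 / (real m + 1) - 2) \<longlonglongrightarrow> euler_mascheroni + 0 - 2"
    by (intro tendsto_intros euler_mascheroni_LIMSEQ l)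
  then show ?thesis unfolding assms sum_cc1 by (simp add: algebra_simps)
qed
definition U :: "real measure" where "U = uniform_measure lborel {0<..1}"

lemma sets_U[simp]: "sets U = sets borel" by (simp add: U_def)
lemma space_U[simp]: "space U = UNIV" by (simp add: U_def)
lemma prob_U: "prob_space U" unfolding U_def by (rule prob_space_uniform_measure) auto

lemma sf_U: "sigma_finite_measure U" by (rule prob_space_imp_sigma_finite[OF prob_U])

lemma meas_pair_U: "f \<in> borel_measurable (borel \<Otimes>\<^sub>M borel) \<Longrightarrow> f \<in> borel_measurable (borel \<Otimes>\<^sub>M U)"
  by (simp add: measurable_cong_sets[OF sets_pair_measure_cong[OF refl sets_U] refl])

lemma nn_U: assumes [measurable]: "f \<in> borel_measurable borel"
  shows "(\<integral>\<^sup>+x. f x \<partial>U) = (\<integral>\<^sup>+x. f x * indicator {0<..1} x \<partial>lborel)"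
  unfolding U_def by (subst nn_integral_uniform_measure) (auto simp: divide_ennreal_def)

lemma beta_nn: assumes "al > 0"
  shows "(\<integral>\<^sup>+u. ennreal (if 0 < u \<and> u < 1 then u powr al * (1 - u)^n * (1 - u) else 0) \<partial>lborel)
     = ennreal (Beta (al+1) (real n + 2))"
proof -
  have h: "((\<lambda>t. t powr (al + 1 - 1) * (1 - t) powr (real n + 2 - 1)) has_integral Beta (al+1) (real n + 2)) {0<..<1}"
    using has_integral_Beta_real[of "al+1" "real n + 2"] assms by (simp add: has_integral_Icc_iff_Ioo)
  have "(\<integral>\<^sup>+u. ennreal (u powr (al + 1 - 1) * (1 - u) powr (real n + 2 - 1)) * indicator {0<..<1} u \<partial>lborel)
     = ennreal (Beta (al+1) (real n + 2))"
    by (rule nn_integral_has_integral_lebesgue'[OF _ h]) auto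
  moreover have "ennreal (u powr (al + 1 - 1) * (1 - u) powr (real n + 2 - 1)) * indicator {0<..<1} u
     = ennreal (if 0 < u \<and> u < 1 then u powr al * (1 - u)^n * (1 - u) else 0)" for u
  proof (cases "0 < u \<and> u < 1")
    case True
    have "(1 - u) powr (real n + 2 - 1) = (1 - u) powr (real (Suc n))" by simp
    also have "\<dots> = (1-u)^n * (1-u)" using True by (subst powr_realpow) auto
    finally have "(1 - u) powr (real n + 2 - 1) = (1-u)^n * (1-u)" .
    then show ?thesis using True by (simp add: indicator_def)
  qed (auto simp: indicator_def)
  ultimately show ?thesis by simp
qed

lemma two_d: assumes "al > 0"
  shows "(\<integral>\<^sup>+a. \<integral>\<^sup>+b. ennreal (if b < a then (a - b) powr al * (1 - (a - b))^n else 0) \<partial>U \<partial>U)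
     = ennreal (Beta (al+1) (real n + 2))"
proof -
  define g where "g u = u powr al * (1 - u)^n" for u :: real
  have inner: "(\<integral>\<^sup>+b. ennreal (if b < a then (a - b) powr al * (1 - (a - b))^n else 0) \<partial>U)
      = (\<integral>\<^sup>+u. ennreal (if 0 < u \<and> u < a then g u else 0) \<partial>lborel)" if a: "0 < a" "a \<le> 1" for a
  proof -
    have "(\<integral>\<^sup>+b. ennreal (if b < a then (a - b) powr al * (1 - (a - b))^n else 0) \<partial>U)
       = (\<integral>\<^sup>+b. ennreal (if b < a then (a - b) powr al * (1 - (a - b))^n else 0) * indicator {0<..1} b \<partial>lborel)"
      by (rule nn_U) measurable
    also have "\<dots> = ennreal \<bar>-1\<bar> * (\<integral>\<^sup>+u. ennreal (if a + -1*u < a then (a - (a + -1*u)) powr al * (1 - (a - (a + -1*u)))^n else 0) * indicator {0<..1} (a + -1*u) \<partial>lborel)"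
      by (rule nn_integral_real_affine) auto
    also have "\<dots> = (\<integral>\<^sup>+u. ennreal (if 0 < u \<and> u < a then g u else 0) \<partial>lborel)"
      using a by (auto intro!: nn_integral_cong simp: indicator_def g_def)
    finally show ?thesis .
  qed
  have "(\<integral>\<^sup>+a. \<integral>\<^sup>+b. ennreal (if b < a then (a - b) powr al * (1 - (a - b))^n else 0) \<partial>U \<partial>U)
     = (\<integral>\<^sup>+a. (\<integral>\<^sup>+b. ennreal (if b < a then (a - b) powr al * (1 - (a - b))^n else 0) \<partial>U) * indicator {0<..1} a \<partial>lborel)"
    by (rule nn_U, rule sigma_finite_measure.borel_measurable_nn_integral[OF sf_U], rule meas_pair_U) measurable
  also have "\<dots> = (\<integral>\<^sup>+a. \<integral>\<^sup>+u. ennreal (if 0 < u \<and> u < a \<and> a \<le> 1 then g u else 0) \<partial>lborel \<partial>lborel)"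
  proof (intro nn_integral_cong)
    fix a :: real
    show "(\<integral>\<^sup>+b. ennreal (if b < a then (a - b) powr al * (1 - (a - b))^n else 0) \<partial>U) * indicator {0<..1} a
       = (\<integral>\<^sup>+u. ennreal (if 0 < u \<and> u < a \<and> a \<le> 1 then g u else 0) \<partial>lborel)"
    proof (cases "0 < a \<and> a \<le> 1")
      case True
      then show ?thesis using inner[of a] by (auto intro!: nn_integral_cong)
    next
      case False
      then have "(\<lambda>u. ennreal (if 0 < u \<and> u < a \<and> a \<le> 1 then g u else 0)) = (\<lambda>u. 0)" by auto
      moreover have "indicator {0<..1} a = (0::ennreal)" using False by (auto simp: indicator_def)
      ultimately show ?thesis by simp
    qed
  qed
  also have "\<dots> = (\<integral>\<^sup>+u. \<integral>\<^sup>+a. ennreal (if 0 < u \<and> u < a \<and> a \<le> 1 then g u else 0) \<partial>lborel \<partial>lborel)"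
    by (rule lborel_pair.Fubini'[where f="\<lambda>u a. ennreal (if 0 < u \<and> u < a \<and> a \<le> 1 then g u else 0)"])
       (unfold g_def, measurable)
  also have "\<dots> = (\<integral>\<^sup>+u. ennreal (if 0 < u \<and> u < 1 then u powr al * (1 - u)^n * (1 - u) else 0) \<partial>lborel)"
  proof (intro nn_integral_cong)
    fix u :: real
    show "(\<integral>\<^sup>+a. ennreal (if 0 < u \<and> u < a \<and> a \<le> 1 then g u else 0) \<partial>lborel)
       = ennreal (if 0 < u \<and> u < 1 then u powr al * (1 - u)^n * (1 - u) else 0)"
    proof (cases "0 < u \<and> u < 1")
      case True
      have "(\<integral>\<^sup>+a. ennreal (if 0 < u \<and> u < a \<and> a \<le> 1 then g u else 0) \<partial>lborel)
          = (\<integral>\<^sup>+a. ennreal (g u) * indicator {u<..1} a \<partial>lborel)"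
        using True by (intro nn_integral_cong) (auto simp: indicator_def)
      also have "\<dots> = ennreal (g u) * emeasure lborel {u<..1}"
        by (simp add: nn_integral_cmult_indicator)
      also have "\<dots> = ennreal (g u * (1 - u))"
        using True by (simp add: ennreal_mult g_def)
      finally show ?thesis using True by (simp add: g_def)
    next
      case False
      then have "(\<lambda>a. ennreal (if 0 < u \<and> u < a \<and> a \<le> 1 then g u else 0)) = (\<lambda>a. 0)" by auto
      moreover have "(if 0 < u \<and> u < 1 then u powr al * (1 - u)^n * (1 - u) else 0) = 0" using False by auto
      ultimately show ?thesis by simp
    qed
  qed
  also have "\<dots> = ennreal (Beta (al+1) (real n + 2))" by (rule beta_nn[OF assms])
  finally show ?thesis .
qed

definition bad :: "nat \<Rightarrow> nat \<Rightarrow> real \<Rightarrow> real \<Rightarrow> real \<Rightarrow> bool" where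
  "bad j k a b z = (if k < j then b \<le> z \<and> z < a else b < z \<and> z < a)"

definition gt :: "real \<Rightarrow> nat \<Rightarrow> nat \<Rightarrow> (nat \<Rightarrow> real) \<Rightarrow> real" where
  "gt al i j x = (if x j < x i \<and> (\<forall>k\<in>{..<i}-{j}. \<not> bad j k (x i) (x j) (x k)) then (x i - x j) powr al else 0)"

lemma term_eq:
  "(if (\<exists>j<i. x j < x i) then (x i - Max {x j | j. j < i \<and> x j < x i}) powr al else 0)
    = (\<Sum>j<i. gt al i j x)"
proof (cases "\<exists>j<i. x j < x i")
  case False
  then have "gt al i j x = 0" if "j < i" for j using that by (auto simp: gt_def)
  then show ?thesis using False by (subst if_not_P[OF False]) simp
next
  case True
  define A where "A = {x j | j. j < i \<and> x j < x i}"
  define M where "M = Max A"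
  have finA: "finite A" unfolding A_def by simp
  have neA: "A \<noteq> {}" using True unfolding A_def by auto
  have MA: "M \<in> A" unfolding M_def using finA neA by simp
  have leM: "\<And>k. k < i \<Longrightarrow> x k < x i \<Longrightarrow> x k \<le> M" unfolding M_def A_def
    using finA by (auto intro!: Max_ge simp: A_def)
  have ex: "\<exists>j. j < i \<and> x j = M" using MA unfolding A_def by auto
  define j0 where "j0 = (LEAST j. j < i \<and> x j = M)"
  have j0: "j0 < i \<and> x j0 = M" unfolding j0_def using LeastI_ex[OF ex] .
  have j0min: "\<And>k. k < i \<Longrightarrow> x k = M \<Longrightarrow> j0 \<le> k" unfolding j0_def by (auto intro: Least_le)
  have Mlt: "M < x i" using MA unfolding A_def by auto
  have g0: "gt al i j0 x = (x i - M) powr al"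
  proof -
    have "\<not> bad j0 k (x i) (x j0) (x k)" if "k < i" "k \<noteq> j0" for k
    proof
      assume b: "bad j0 k (x i) (x j0) (x k)"
      show False
      proof (cases "k < j0")
        case True
        then have "M \<le> x k" "x k < x i" using b j0 by (auto simp: bad_def)
        then have "x k = M" using leM[OF \<open>k<i\<close>] by auto
        then show False using j0min[OF \<open>k<i\<close>] True by auto
      next
        case False
        then have "M < x k" "x k < x i" using b j0 by (auto simp: bad_def)
        then show False using leM[OF \<open>k<i\<close>] by auto
      qed
    qed
    then show ?thesis using j0 Mlt unfolding gt_def by auto
  qed
  have gz: "gt al i j x = 0" if "j < i" "j \<noteq> j0" for j
  proof (rule ccontr)
    assume "gt al i j x \<noteq> 0"
    then have lt: "x j < x i" and nb: "\<And>k. k < i \<Longrightarrow> k \<noteq> j \<Longrightarrow> \<not> bad j k (x i) (x j) (x k)"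
      unfolding gt_def by (auto split: if_splits)
    have "x j \<le> M" using leM[OF that(1) lt] .
    show False
    proof (cases "x j < M")
      case True
      then have "bad j j0 (x i) (x j) (x j0)" using j0 Mlt by (auto simp: bad_def)
      then show False using nb[of j0] j0 that by auto
    next
      case False
      then have "x j = M" using \<open>x j \<le> M\<close> by auto
      then have "j0 < j" using j0min[OF that(1)] that by auto
      then have "bad j j0 (x i) (x j) (x j0)" using j0 Mlt \<open>x j = M\<close> by (auto simp: bad_def)
      then show False using nb[of j0] j0 that by auto
    qed
  qed
  have "(\<Sum>j<i. gt al i j x) = gt al i j0 x + (\<Sum>j\<in>{..<i}-{j0}. gt al i j x)"
    using j0 by (subst sum.remove[of _ j0]) auto
  also have "(\<Sum>j\<in>{..<i}-{j0}. gt al i j x) = 0" using gz by (intro sum.neutral) auto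
  finally show ?thesis using True g0 unfolding M_def A_def by simp
qed


lemma comp_meas: "k \<in> I \<Longrightarrow> (\<lambda>x. x k) \<in> borel_measurable (PiM I (\<lambda>_. U))"
  by (subst measurable_cong_sets[OF refl sets_U[symmetric]]) (rule measurable_component_singleton)
lemma pred_le_gen1: assumes [measurable]: "f \<in> borel_measurable M" "g \<in> borel_measurable M"
  shows "Measurable.pred M (\<lambda>x. (f x::real) \<le> g x)"
  by measurable
lemma pred_le_gen2: assumes [measurable]: "f \<in> borel_measurable M" "g \<in> borel_measurable M"
  shows "Measurable.pred M (\<lambda>x. (f x::real) < g x)"
  by measurable
lemmas pred_le_gen = pred_le_gen1 pred_le_gen2
lemma powr_meas_gen: assumes [measurable]: "f \<in> borel_measurable M" "g \<in> borel_measurable M"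
  shows "(\<lambda>x. (f x - g x :: real) powr al) \<in> borel_measurable M"
  by measurable
lemma meas_gt: assumes "{..i} \<subseteq> I" "j < i" shows "gt al i j \<in> borel_measurable (PiM I (\<lambda>_. U))"
proof -
  have iI: "i \<in> I" "j \<in> I" using assms by auto
  have P: "Measurable.pred (PiM I (\<lambda>_. U)) (\<lambda>x. \<forall>k\<in>{..<i}-{j}. \<not> bad j k (x i) (x j) (x k))"
  proof (rule pred_intros_finite(3))
    fix k assume "k \<in> {..<i}-{j}"
    then have kI: "k \<in> I" using assms by auto
    note cm = comp_meas[OF kI] comp_meas[OF iI(1)] comp_meas[OF iI(2)]
    show "Measurable.pred (PiM I (\<lambda>_. U)) (\<lambda>x. \<not> bad j k (x i) (x j) (x k))"
      unfolding bad_def by (cases "k < j") (simp_all only: if_True if_False, 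
        (intro pred_intros_logic pred_le_gen cm)+)
  qed simp
  have P2: "Measurable.pred (PiM I (\<lambda>_. U)) (\<lambda>x. x j < x i \<and> (\<forall>k\<in>{..<i}-{j}. \<not> bad j k (x i) (x j) (x k)))"
    by (intro pred_intros_logic P pred_le_gen comp_meas iI)
  show ?thesis unfolding gt_def
    by (rule measurable_If) (use P2 in \<open>auto simp: Measurable.pred_def intro!: powr_meas_gen comp_meas iI\<close>)
qed

lemma prod01: "finite K \<Longrightarrow> (\<Prod>k\<in>K. if P k then (0::ennreal) else 1) = (if \<exists>k\<in>K. P k then 0 else 1)"
  by (induction K rule: finite_induct) auto

lemma psi_meas: "(\<lambda>z. if k < i \<and> bad j k a b z then (0::ennreal) else 1) \<in> borel_measurable U"
proof -
  have "(\<lambda>z. if k < i \<and> bad j k a b z then (0::ennreal) else 1) \<in> borel_measurable borel"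
    unfolding bad_def by measurable
  then show ?thesis by (subst measurable_cong_sets[OF sets_U refl])
qed

lemma meas_UU: "f \<in> borel_measurable (borel \<Otimes>\<^sub>M borel) \<Longrightarrow> f \<in> borel_measurable (U \<Otimes>\<^sub>M U)"
  by (subst measurable_cong_sets[OF sets_pair_measure_cong[OF sets_U sets_U] refl])

lemma psi_int: assumes "0 < b" "b < a" "a \<le> 1"
  shows "(\<integral>\<^sup>+z. (if k < i \<and> bad j k a b z then (0::ennreal) else 1) \<partial>U)
     = (if k < i then ennreal (1 - (a - b)) else 1)"
proof (cases "k < i")
  case False
  then show ?thesis using prob_space.emeasure_space_1[OF prob_U] by simp
next
  case True
  define B where "B = (if k < j then {b..<a} else {b<..<a})"
  have B: "B \<subseteq> {0<..1}" "B \<in> sets lborel" using assms by (auto simp: B_def)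
  have eB: "emeasure lborel B = ennreal (a - b)" using assms by (simp add: B_def)
  have "(\<lambda>z. if k < i \<and> bad j k a b z then (0::ennreal) else 1) = indicator (UNIV - B)"
    using True by (auto simp: bad_def B_def indicator_def fun_eq_iff)
  then have "(\<integral>\<^sup>+z. (if k < i \<and> bad j k a b z then (0::ennreal) else 1) \<partial>U) = emeasure U (UNIV - B)"
    using B by (simp add: nn_integral_indicator)
  also have "\<dots> = emeasure lborel ({0<..1} \<inter> (UNIV - B))"
    unfolding U_def using B by (subst emeasure_uniform_measure) (auto simp: divide_ennreal_def)
  also have "{0<..1} \<inter> (UNIV - B) = {0<..1} - B" by auto
  also have "emeasure lborel ({0<..1} - B) = emeasure lborel {0<..1::real} - emeasure lborel B"
    by (rule emeasure_Diff) (use B eB in auto)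
  also have "\<dots> = ennreal 1 - ennreal (a - b)" using eB by simp
  also have "\<dots> = ennreal (1 - (a - b))" using assms by (intro ennreal_minus) auto
  finally show ?thesis using True by (simp add: divide_ennreal_def)
qed

lemma int_gt: assumes "j < i" "i < m" "al > 0"
  shows "(\<integral>\<^sup>+x. ennreal (gt al i j x) \<partial>PiM {..<m} (\<lambda>_. U)) = ennreal (Beta (al+1) (real (i - 1) + 2))"
proof -
  interpret PS: product_sigma_finite "\<lambda>_. U" by (simp add: product_sigma_finite_def sf_U)
  define S where "S = {..<m} - {i, j}"
  define phi where "phi a b = (if b < a then (a - b) powr al else 0)" for a b :: real
  define psi where "psi k a b z = (if k < i \<and> bad j k a b z then (0::ennreal) else 1)" for k a b z
  have finS: "finite S" by (simp add: S_def)
  have ptw: "ennreal (gt al i j x) = ennreal (phi (x i) (x j)) * (\<Prod>k\<in>S. psi k (x i) (x j) (x k))" for x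
  proof -
    have "(\<Prod>k\<in>S. psi k (x i) (x j) (x k)) = (if \<exists>k\<in>S. k < i \<and> bad j k (x i) (x j) (x k) then 0 else 1)"
      unfolding psi_def by (rule prod01[OF finS])
    moreover have "(\<exists>k\<in>S. k < i \<and> bad j k (x i) (x j) (x k)) \<longleftrightarrow> (\<exists>k\<in>{..<i}-{j}. bad j k (x i) (x j) (x k))"
      using assms by (auto simp: S_def)
    ultimately show ?thesis unfolding gt_def phi_def by auto
  qed
  have mUU1: "case_prod (\<lambda>a b. ennreal (if b < a then (a - b) powr al * (1 - (a - b))^(i - 1) else 0)) \<in> borel_measurable (U \<Otimes>\<^sub>M U)"
    by (rule meas_UU) measurable
  have mUU2: "(\<lambda>z. ennreal (if snd z < fst z then (fst z - snd z) powr al * (1 - (fst z - snd z))^(i - 1) else 0)) \<in> borel_measurable (U \<Otimes>\<^sub>M U)"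
    by (rule meas_UU) measurable
  have Um: "{..<m} = {i, j} \<union> S" using assms by (auto simp: S_def)
  have dis: "{i, j} \<inter> S = {}" by (auto simp: S_def)
  have measF: "(\<lambda>x. ennreal (gt al i j x)) \<in> borel_measurable (PiM ({i, j} \<union> S) (\<lambda>_. U))"
  proof -
    have "{..i} \<subseteq> {i, j} \<union> S" using assms by (auto simp: S_def)
    then have "gt al i j \<in> borel_measurable (PiM ({i, j} \<union> S) (\<lambda>_. U))" by (rule meas_gt) (rule assms(1))
    then show ?thesis by (rule measurable_compose[OF _ measurable_ennreal])
  qed
  have "(\<integral>\<^sup>+x. ennreal (gt al i j x) \<partial>PiM {..<m} (\<lambda>_. U))
     = (\<integral>\<^sup>+p. \<integral>\<^sup>+y. ennreal (gt al i j (merge {i, j} S (p, y))) \<partial>PiM S (\<lambda>_. U) \<partial>PiM {i, j} (\<lambda>_. U))"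
    unfolding Um by (rule PS.product_nn_integral_fold[OF dis _ finS measF]) simp
  also have "\<dots> = (\<integral>\<^sup>+p. ennreal (phi (p i) (p j)) * (\<Prod>k\<in>S. \<integral>\<^sup>+z. psi k (p i) (p j) z \<partial>U) \<partial>PiM {i, j} (\<lambda>_. U))"
  proof (intro nn_integral_cong)
    fix p :: "nat \<Rightarrow> real"
    have mg: "merge {i, j} S (p, y) i = p i" "merge {i, j} S (p, y) j = p j"
      "\<And>k. k \<in> S \<Longrightarrow> merge {i, j} S (p, y) k = y k" for y
      using dis by (auto simp: merge_def)
    have "(\<integral>\<^sup>+y. ennreal (gt al i j (merge {i, j} S (p, y))) \<partial>PiM S (\<lambda>_. U))
        = (\<integral>\<^sup>+y. ennreal (phi (p i) (p j)) * (\<Prod>k\<in>S. psi k (p i) (p j) (y k)) \<partial>PiM S (\<lambda>_. U))"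
      unfolding ptw mg by (intro nn_integral_cong prod.cong) (auto simp: mg)
    also have "\<dots> = ennreal (phi (p i) (p j)) * (\<integral>\<^sup>+y. (\<Prod>k\<in>S. psi k (p i) (p j) (y k)) \<partial>PiM S (\<lambda>_. U))"
    proof (rule nn_integral_cmult)
      show "(\<lambda>y. \<Prod>k\<in>S. psi k (p i) (p j) (y k)) \<in> borel_measurable (PiM S (\<lambda>_. U))"
        by (intro borel_measurable_prod_ennreal measurable_compose[OF measurable_component_singleton]) 
           (auto simp: psi_def psi_meas)
    qed
    also have "(\<integral>\<^sup>+y. (\<Prod>k\<in>S. psi k (p i) (p j) (y k)) \<partial>PiM S (\<lambda>_. U)) = (\<Prod>k\<in>S. \<integral>\<^sup>+z. psi k (p i) (p j) z \<partial>U)"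
      by (rule PS.product_nn_integral_prod[OF finS]) (simp add: psi_def psi_meas)
    finally show "(\<integral>\<^sup>+y. ennreal (gt al i j (merge {i, j} S (p, y))) \<partial>PiM S (\<lambda>_. U))
        = ennreal (phi (p i) (p j)) * (\<Prod>k\<in>S. \<integral>\<^sup>+z. psi k (p i) (p j) z \<partial>U)" .
  qed
  also have "\<dots> = (\<integral>\<^sup>+p. ennreal (if p j < p i then (p i - p j) powr al * (1 - (p i - p j))^(i - 1) else 0) \<partial>PiM {i, j} (\<lambda>_. U))"
  proof (rule nn_integral_cong_AE)
    have AEU: "AE z in U. z \<in> {0<..1}" unfolding U_def by (rule AE_uniform_measureI) auto
    have "AE p in PiM {i, j} (\<lambda>_. U). p i \<in> {0<..1}"
      by (rule AE_PiM_component[OF prob_U _ AEU]) simp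
    moreover have "AE p in PiM {i, j} (\<lambda>_. U). p j \<in> {0<..1}"
      by (rule AE_PiM_component[OF prob_U _ AEU]) simp
    ultimately show "AE p in PiM {i, j} (\<lambda>_. U). ennreal (phi (p i) (p j)) * (\<Prod>k\<in>S. \<integral>\<^sup>+z. psi k (p i) (p j) z \<partial>U)
       = ennreal (if p j < p i then (p i - p j) powr al * (1 - (p i - p j))^(i - 1) else 0)"
    proof eventually_elim
      case (elim p)
      show ?case
      proof (cases "p j < p i")
        case False then show ?thesis by (simp add: phi_def)
      next
        case True
        have "(\<Prod>k\<in>S. \<integral>\<^sup>+z. psi k (p i) (p j) z \<partial>U) = (\<Prod>k\<in>S. if k < i then ennreal (1 - (p i - p j)) else 1)"
          unfolding psi_def using elim True by (intro prod.cong refl psi_int) auto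
        also have "\<dots> = (\<Prod>k\<in>{k\<in>S. k < i}. ennreal (1 - (p i - p j)))"
          by (rule prod.inter_filter[OF finS, symmetric])
        also have "{k\<in>S. k < i} = {..<i} - {j}" using assms by (auto simp: S_def)
        also have "(\<Prod>k\<in>{..<i} - {j}. ennreal (1 - (p i - p j))) = ennreal (1 - (p i - p j)) ^ (i - 1)"
          using assms by (simp add: card_Diff_singleton)
        also have "\<dots> = ennreal ((1 - (p i - p j)) ^ (i - 1))"
          using elim True by (intro ennreal_power) auto
        finally show ?thesis using True elim by (simp add: phi_def ennreal_mult[symmetric])
      qed
    qed
  qed
  also have "\<dots> = (\<integral>\<^sup>+z. ennreal (if snd z < fst z then (fst z - snd z) powr al * (1 - (fst z - snd z))^(i - 1) else 0) \<partial>(U \<Otimes>\<^sub>M U))"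
    using assms
    by (intro PS.product_nn_integral_pair[where f="\<lambda>a b. ennreal (if b < a then (a - b) powr al * (1 - (a - b))^(i - 1) else 0)"])
       (use assms mUU1 in auto)
  also have "\<dots> = (\<integral>\<^sup>+a. \<integral>\<^sup>+b. ennreal (if b < a then (a - b) powr al * (1 - (a - b))^(i - 1) else 0) \<partial>U \<partial>U)"
  proof -
    have "(\<integral>\<^sup>+a. \<integral>\<^sup>+b. ennreal (if b < a then (a - b) powr al * (1 - (a - b))^(i - 1) else 0) \<partial>U \<partial>U) = integral\<^sup>N (U \<Otimes>\<^sub>M U) (case_prod (\<lambda>a b. ennreal (if b < a then (a - b) powr al * (1 - (a - b))^(i - 1) else 0)))"
      using sigma_finite_measure.nn_integral_fst[OF sf_U mUU1] by simp
    then show ?thesis by (simp add: case_prod_beta')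
  qed
  also have "\<dots> = ennreal (Beta (al+1) (real (i - 1) + 2))" by (rule two_d[OF assms(3)])
  finally show ?thesis .
qed
lemma gt_nonneg: "0 \<le> gt al i j x" unfolding gt_def by auto

lemma ED_eq: assumes "al > 0" shows "ED al m = (\<Sum>i\<in>{1..<m}. cc al i)"
proof -
  have uc: "unif_cube m = PiM {..<m} (\<lambda>_. U)" by (simp add: unif_cube_def U_def)
  have dw: "dlf_weight al m = (\<lambda>x. \<Sum>i\<in>{1..<m}. \<Sum>j<i. gt al i j x)"
    by (simp add: dlf_weight_def term_eq fun_eq_iff)
  have mg: "(\<lambda>x. gt al i j x) \<in> borel_measurable (PiM {..<m} (\<lambda>_. U))" if "i \<in> {1..<m}" "j < i" for i j
    using that by (intro meas_gt) auto
  have meas: "dlf_weight al m \<in> borel_measurable (PiM {..<m} (\<lambda>_. U))"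
    unfolding dw by (intro borel_measurable_sum mg) auto
  have "ED al m = enn2real (\<integral>\<^sup>+x. ennreal (dlf_weight al m x) \<partial>PiM {..<m} (\<lambda>_. U))"
    unfolding ED_def uc using meas
    by (intro integral_eq_nn_integral) (auto simp: dw intro!: sum_nonneg gt_nonneg)
  also have "(\<integral>\<^sup>+x. ennreal (dlf_weight al m x) \<partial>PiM {..<m} (\<lambda>_. U))
      = (\<integral>\<^sup>+x. (\<Sum>i\<in>{1..<m}. \<Sum>j<i. ennreal (gt al i j x)) \<partial>PiM {..<m} (\<lambda>_. U))"
    unfolding dw by (intro nn_integral_cong) (simp add: sum_nonneg gt_nonneg)
  also have "\<dots> = (\<Sum>i\<in>{1..<m}. \<Sum>j<i. \<integral>\<^sup>+x. ennreal (gt al i j x) \<partial>PiM {..<m} (\<lambda>_. U))"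
  proof -
    have "(\<integral>\<^sup>+x. (\<Sum>i\<in>{1..<m}. \<Sum>j<i. ennreal (gt al i j x)) \<partial>PiM {..<m} (\<lambda>_. U))
        = (\<Sum>i\<in>{1..<m}. \<integral>\<^sup>+x. (\<Sum>j<i. ennreal (gt al i j x)) \<partial>PiM {..<m} (\<lambda>_. U))"
      by (intro nn_integral_sum borel_measurable_sum measurable_compose[OF mg measurable_ennreal]) auto
    also have "\<dots> = (\<Sum>i\<in>{1..<m}. \<Sum>j<i. \<integral>\<^sup>+x. ennreal (gt al i j x) \<partial>PiM {..<m} (\<lambda>_. U))"
      by (intro sum.cong refl nn_integral_sum measurable_compose[OF mg measurable_ennreal]) auto
    finally show ?thesis .
  qed
  also have "\<dots> = (\<Sum>i\<in>{1..<m}. ennreal (cc al i))"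
  proof (intro sum.cong refl)
    fix i assume i: "i \<in> {1..<m}"
    have "(\<Sum>j<i. \<integral>\<^sup>+x. ennreal (gt al i j x) \<partial>PiM {..<m} (\<lambda>_. U)) = (\<Sum>j<i. ennreal (Beta (al+1) (real (i - 1) + 2)))"
      using i assms by (intro sum.cong refl int_gt) auto
    also have "\<dots> = of_nat i * ennreal (Beta (al+1) (real i + 1))"
      using i by (simp add: of_nat_diff add.commute)
    also have "\<dots> = ennreal (cc al i)"
      unfolding cc_def by (simp add: ennreal_of_nat_eq_real_of_nat ennreal_mult')
    finally show "(\<Sum>j<i. \<integral>\<^sup>+x. ennreal (gt al i j x) \<partial>PiM {..<m} (\<lambda>_. U)) = ennreal (cc al i)" .
  qed
  also have cc0: "\<And>i. 0 \<le> cc al i"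
    using assms unfolding cc_def Beta_def by (intro mult_nonneg_nonneg divide_nonneg_nonneg) (auto intro: less_imp_le)
  have "(\<Sum>i\<in>{1..<m}. ennreal (cc al i)) = ennreal (\<Sum>i\<in>{1..<m}. cc al i)"
    using cc0 by simp
  finally show ?thesis using cc0 by (simp add: sum_nonneg)
qed


theorem proposition2:
  shows "(\<forall>\<alpha>::real. 0 < \<alpha> \<and> \<alpha> < 1 \<longrightarrow>
            (\<lambda>m. ED \<alpha> m) \<sim>[at_top] (\<lambda>m. Gamma (\<alpha> + 1) / (1 - \<alpha>) * real m powr (1 - \<alpha>)))
       \<and> ((\<lambda>m. ED 1 m - ln (real m)) \<longlonglongrightarrow> euler_mascheroni - 2)
       \<and> (\<forall>\<alpha>::real. \<alpha> > 1 \<longrightarrow> (\<lambda>m. ED \<alpha> m) \<longlonglongrightarrow> 1 / (\<alpha> * (\<alpha> - 1)))"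
proof (intro conjI allI impI)
  fix a :: real assume "0 < a \<and> a < 1"
  then show "(\<lambda>m. ED a m) \<sim>[at_top] (\<lambda>m. Gamma (a + 1) / (1 - a) * real m powr (1 - a))"
    by (intro asym_lt1 ED_eq) auto
next
  show "(\<lambda>m. ED 1 m - ln (real m)) \<longlonglongrightarrow> euler_mascheroni - 2"
    by (intro asym_1 ED_eq) auto
next
  fix a :: real assume "a > 1"
  then show "(\<lambda>m. ED a m) \<longlonglongrightarrow> 1 / (a * (a - 1))"
    by (intro asym_gt1 ED_eq) auto
qed

end
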